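(* Let $\mathcal{X}$ be a nonempty closed domain set whose closed convex hull $\operatorname{clconv}(\mathcal{X})$ contains no line, and let $0\le\tilde m\le m$ be integers. Suppose that $F+\widehat F\subseteq\mathcal{X}$ for every face $F$ of $\operatorname{clconv}(\mathcal{X})$ of dimension at most $\tilde m$ and every face $\widehat F$ of the recession cone $\operatorname{rec}(\operatorname{clconv}(\mathcal{X}))$ of dimension at most $\tilde m+1$. Then for every matrix $A_0$ and every system of $m$ LMIs of dimension $\tilde m$, $\mathbf{V}_{\mathrm{opt}}=\mathbf{V}_{\mathrm{rel}}$.
   Context: Let $\mathcal{Q}$ be one of $\mathbb{S}^n_+$, $\mathbb{S}^n$ or $\mathbb{R}^{n\times p}$, where $k\le n\le p$ are positive integers, with trace inner product $\langle A,X\rangle=\operatorname{tr}(A^\top X)$. A domain set is a set $\mathcal{X}=\{X\in\mathcal{Q}:\operatorname{rank}(X)\le k,\ F_j(X)\le0\ \forall j\in[t]\}$ with each $F_j:\mathcal{Q}\to\mathbb{R}$ continuous. A system of $m$ LMIs consists of matrices $A_1,\dots,A_m$ (same size as elements of $\mathcal{Q}$, possibly non-symmetric) and bounds $-\infty\le b_i^l\le b_i^u\le+\infty$; its dimension is $\dim\operatorname{span}\{A_1,\dots,A_m\}$. Set $\mathcal{C}=\{X\in\mathcal{X}: b_i^l\le\langle A_i,X\rangle\le b_i^u\ \forall i\}$, $\mathcal{C}_{\mathrm{rel}}=\{X\in\operatorname{clconv}(\mathcal{X}): b_i^l\le\langle A_i,X\rangle\le b_i^u\ \forall i\}$, and for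 an objective matrix $A_0$, $\mathbf{V}_{\mathrm{opt}}=\inf_{X\in\mathcal{C}}\langle A_0,X\rangle$ (the rank-constrained problem) and $\mathbf{V}_{\mathrm{rel}}=\inf_{X\in\mathcal{C}_{\mathrm{rel}}}\langle A_0,X\rangle$ (its Dantzig–Wolfe relaxation). A face of a closed convex set $D$ is a convex $F\subseteq D$ such that any segment $[a,b]\subseteq D$ whose open part meets $F$ lies in $F$; its dimension is that of its affine hull. $\operatorname{rec}(D)=\{d: x+td\in D\ \forall x\in D,\ t\ge0\}$. *)

theory Defs
  imports "HOL-Analysis.Analysis" "HOL-Library.Extended_Real"
begin

text \<open>Matrices of size n x p are elements of real^'p^'n (entry (i,j) is X $ i $ j).
  The inner product on this type is the trace inner product
  X \<bullet> Y = (\<Sum>i j. X$i$j * Y$i$j) = tr(X^T Y).\<close>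

definition sym_mats :: "(real^'n^'n) set" where
  "sym_mats = {X. transpose X = X}"

definition psd_mats :: "(real^'n^'n) set" where
  "psd_mats = {X. transpose X = X \<and> (\<forall>v. 0 \<le> v \<bullet> (X *v v))}"

definition is_domain_set :: "(real^'p^'n) set \<Rightarrow> nat \<Rightarrow> (real^'p^'n) set \<Rightarrow> bool" where
  "is_domain_set Q k XX \<longleftrightarrow>
     (\<exists>(t::nat) (F :: nat \<Rightarrow> real^'p^'n \<Rightarrow> real).
        (\<forall>j<t. continuous_on Q (F j)) \<and>
        XX = {X \<in> Q. rank X \<le> k \<and> (\<forall>j<t. F j X \<le> 0)})"

definition rec_cone :: "('a::real_vector) set \<Rightarrow> 'a set" where
  "rec_cone D = {d. \<forall>x\<in>D. \<forall>t::real. t \<ge> 0 \<longrightarrow> x + t *\<^sub>R d \<in> D}"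

definition contains_line :: "('a::real_vector) set \<Rightarrow> bool" where
  "contains_line D \<longleftrightarrow> (\<exists>x d. d \<noteq> 0 \<and> (\<forall>t::real. x + t *\<^sub>R d \<in> D))"

definition set_plus_Mink :: "('a::real_vector) set \<Rightarrow> 'a set \<Rightarrow> 'a set" where
  "set_plus_Mink F G = {x + y | x y. x \<in> F \<and> y \<in> G}"

definition lmi_feasible ::
  "('a::real_inner) set \<Rightarrow> nat \<Rightarrow> (nat \<Rightarrow> 'a) \<Rightarrow> (nat \<Rightarrow> ereal) \<Rightarrow> (nat \<Rightarrow> ereal) \<Rightarrow> 'a set" where
  "lmi_feasible S m A bl bu =
     {X \<in> S. \<forall>i<m. bl i \<le> ereal (A i \<bullet> X) \<and> ereal (A i \<bullet> X) \<le> bu i}"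

definition V_opt ::
  "('a::real_inner) set \<Rightarrow> 'a \<Rightarrow> nat \<Rightarrow> (nat \<Rightarrow> 'a) \<Rightarrow> (nat \<Rightarrow> ereal) \<Rightarrow> (nat \<Rightarrow> ereal) \<Rightarrow> ereal" where
  "V_opt XX A0 m A bl bu = (INF X \<in> lmi_feasible XX m A bl bu. ereal (A0 \<bullet> X))"

definition V_rel ::
  "('a::{real_inner}) set \<Rightarrow> 'a \<Rightarrow> nat \<Rightarrow> (nat \<Rightarrow> 'a) \<Rightarrow> (nat \<Rightarrow> ereal) \<Rightarrow> (nat \<Rightarrow> ereal) \<Rightarrow> ereal" where
  "V_rel XX A0 m A bl bu = (INF X \<in> lmi_feasible (closure (convex hull XX)) m A bl bu. ereal (A0 \<bullet> X))"

definition theorem6_claim :: "(real^'p^'n) set \<Rightarrow> nat \<Rightarrow> bool" where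
  "theorem6_claim Q k \<longleftrightarrow>
    (\<forall>(XX :: (real^'p^'n) set) (m::nat) (mt::nat).
       is_domain_set Q k XX \<and> XX \<noteq> {} \<and> closed XX \<and>
       \<not> contains_line (closure (convex hull XX)) \<and> mt \<le> m \<and>
       (\<forall>F Fh. F face_of closure (convex hull XX) \<and> aff_dim F \<le> int mt \<and>
               Fh face_of rec_cone (closure (convex hull XX)) \<and> aff_dim Fh \<le> int mt + 1
               \<longrightarrow> set_plus_Mink F Fh \<subseteq> XX)
       \<longrightarrow> (\<forall>(A0 :: real^'p^'n) (A :: nat \<Rightarrow> real^'p^'n) (bl :: nat \<Rightarrow> ereal) bu.
              (\<forall>i<m. bl i \<le> bu i) \<and> dim (span (A ` {..<m})) = mt
              \<longrightarrow> V_opt XX A0 m A bl bu = V_rel XX A0 m A bl bu))"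

end

theory Submission
  imports Defs
begin


lemma rec_of_ray:
  fixes S :: "'a::euclidean_space set"
  assumes "closed S" "convex S" "y \<in> S" "\<And>t. t \<ge> 0 \<Longrightarrow> y + t *\<^sub>R e \<in> S"
  shows "e \<in> rec_cone S"
  unfolding rec_cone_def
proof (intro CollectI ballI allI impI)
  fix x t assume x: "x \<in> S" and t: "(0::real) \<le> t"
  define f where "f n = x + t *\<^sub>R e + (t / ((t + 1) + real n)) *\<^sub>R (y - x)" for n
  have fS: "f n \<in> S" for n
  proof -
    define s where "s = (t + 1) + real n"
    have s: "s > 0" "t / s \<le> 1" using t by (auto simp: s_def)
    have "(1 - t/s) *\<^sub>R x + (t/s) *\<^sub>R (y + s *\<^sub>R e) \<in> S"
      by (rule convexD[OF assms(2) x assms(4)]) (use s t in auto)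
    moreover have "(1 - t/s) *\<^sub>R x + (t/s) *\<^sub>R (y + s *\<^sub>R e) = f n"
    proof -
      have "f n = x + t *\<^sub>R e + (t/s) *\<^sub>R (y - x)" by (simp add: f_def s_def add.assoc)
      moreover have "(t/s) *\<^sub>R (s *\<^sub>R e) = t *\<^sub>R e" using s by simp
      ultimately show ?thesis by (simp add: algebra_simps)
    qed
    ultimately show ?thesis by simp
  qed
  have lim0: "(\<lambda>n. t / ((t + 1) + real n)) \<longlonglongrightarrow> 0"
  proof -
    have "filterlim (\<lambda>n. (t + 1) + real n) at_top sequentially"
      by (intro filterlim_tendsto_add_at_top[OF tendsto_const] filterlim_real_sequentially)
    then show ?thesis by (rule real_tendsto_divide_at_top[OF tendsto_const])
  qed
  have "f \<longlonglongrightarrow> x + t *\<^sub>R e + 0 *\<^sub>R (y - x)"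
    unfolding f_def by (intro tendsto_intros lim0)
  then have "f \<longlonglongrightarrow> x + t *\<^sub>R e" by simp
  then show "x + t *\<^sub>R e \<in> S"
    using closed_sequentially[OF assms(1)] fS by blast
qed



lemma exit_face:
  fixes G :: "'a::euclidean_space set"
  assumes G: "closed G" "convex G" and y: "y \<in> G"
    and aff: "\<And>t. y + t *\<^sub>R u \<in> affine hull G"
    and t1: "t1 \<ge> 0" "y + t1 *\<^sub>R u \<notin> G"
  obtains s G' where "s \<ge> 0" "y + s *\<^sub>R u \<in> G'" "G' face_of G" "aff_dim G' < aff_dim G"
proof -
  define T where "T = {0..t1} \<inter> (\<lambda>s. y + s *\<^sub>R u) -` G"
  have "closed ((\<lambda>s. y + s *\<^sub>R u) -` G)"
    by (intro continuous_closed_vimage G(1)) (auto intro!: continuous_intros)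
  then have "compact T" unfolding T_def
    by (intro compact_Int_closed) auto
  moreover have "0 \<in> T" using y t1 by (auto simp: T_def)
  ultimately obtain s where sT: "s \<in> T" and smax: "\<And>s'. s' \<in> T \<Longrightarrow> s' \<le> s"
    using compact_attains_sup[of T] by blast
  have s0: "s \<ge> 0" and st1: "s \<le> t1" and ys: "y + s *\<^sub>R u \<in> G" using sT by (auto simp: T_def)
  have "s \<noteq> t1" using sT t1 by (auto simp: T_def)
  with st1 have slt: "s < t1" by simp
  have u0: "u \<noteq> 0" using t1 y by auto
  have notri: "y + s *\<^sub>R u \<notin> rel_interior G"
  proof
    assume "y + s *\<^sub>R u \<in> rel_interior G"
    then obtain e where e: "e > 0" "ball (y + s *\<^sub>R u) e \<inter> affine hull G \<subseteq> G"
      using mem_rel_interior_ball by blast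
    define d where "d = min (t1 - s) (e / (2 * norm u))"
    have d: "d > 0" "d \<le> t1 - s" "d * norm u < e"
    proof -
      show "d > 0" "d \<le> t1 - s" using slt e u0 by (auto simp: d_def)
      have "d * norm u \<le> (e / (2 * norm u)) * norm u"
        using u0 by (intro mult_right_mono) (auto simp: d_def)
      also have "\<dots> = e / 2" using u0 by simp
      finally show "d * norm u < e" using e by simp
    qed
    have "y + (s + d) *\<^sub>R u \<in> ball (y + s *\<^sub>R u) e"
      using d by (simp add: dist_norm algebra_simps)
    then have "y + (s + d) *\<^sub>R u \<in> G" using e aff by blast
    then have "s + d \<in> T" using d s0 by (auto simp: T_def)
    then show False using smax d by fastforce
  qed
  obtain a where a: "a \<noteq> 0" "\<And>z. z \<in> G \<Longrightarrow> a \<bullet> (y + s *\<^sub>R u) \<le> a \<bullet> z"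
    "\<And>z. z \<in> rel_interior G \<Longrightarrow> a \<bullet> (y + s *\<^sub>R u) < a \<bullet> z"
    using supporting_hyperplane_rel_boundary[OF G(2) ys notri] by blast
  define G' where "G' = G \<inter> {z. a \<bullet> z = a \<bullet> (y + s *\<^sub>R u)}"
  have f: "G' face_of G" unfolding G'_def
    by (rule face_of_Int_supporting_hyperplane_ge) (use G a in auto)
  have "rel_interior G \<noteq> {}" using rel_interior_eq_empty G y by blast
  then obtain w where "w \<in> rel_interior G" by blast
  then have "w \<notin> G'" "w \<in> G" using a(3) rel_interior_subset by (force simp: G'_def)+
  then have "G' \<noteq> G" by blast
  then have "aff_dim G' < aff_dim G" using face_of_aff_dim_lt G f by blast
  moreover have "y + s *\<^sub>R u \<in> G'" using ys by (simp add: G'_def)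
  ultimately show ?thesis using that s0 f by blast
qed



lemma descent:
  fixes S :: "'a::euclidean_space set"
  assumes S: "closed S" "convex S" "\<not> contains_line S"
    and M: "subspace M" "DIM('a) \<le> dim M + n"
    and cpos: "\<And>e. e \<in> M \<Longrightarrow> e \<in> rec_cone S \<Longrightarrow> c \<bullet> e \<ge> 0"
  shows "G face_of S \<Longrightarrow> y \<in> G \<Longrightarrow>
    \<exists>F z. F face_of S \<and> aff_dim F \<le> int n \<and> z \<in> F \<and> z - y \<in> M \<and> c \<bullet> z \<le> c \<bullet> y"
proof (induction "nat (aff_dim G + 1)" arbitrary: G y rule: less_induct)
  case less
  note GS = less.prems(1) and y = less.prems(2)
  have Gc: "closed G" "convex G" using face_of_imp_closed[OF S(2,1) GS] face_of_imp_convex[OF GS] by simp_all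
  show ?case
  proof (cases "aff_dim G \<le> int n")
    case True
    have "y - y \<in> M" using subspace_0[OF M(1)] by simp
    moreover have "c \<bullet> y \<le> c \<bullet> y" by simp
    ultimately show ?thesis using GS y True by (intro exI[of _ G] exI[of _ y]) simp
  next
    case False
    define V where "V = span ((+) (- y) ` G)"
    have yaff: "y \<in> affine hull G" by (rule hull_inc[OF y])
    have "aff_dim G = int (dim ((+) (- y) ` G))" by (rule aff_dim_eq_dim[OF yaff])
    then have dV: "dim V > n" using False by (simp add: V_def dim_span)
    have "dim {x + z |x z. x \<in> V \<and> z \<in> M} + dim (V \<inter> M) = dim V + dim M"
      by (rule dim_sums_Int) (auto simp: V_def M)
    moreover have "dim {x + z |x z. x \<in> V \<and> z \<in> M} \<le> DIM('a)" by (rule dim_subset_UNIV)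
    ultimately have "dim (V \<inter> M) \<noteq> 0" using dV M(2) by linarith
    then obtain e where e: "e \<in> V" "e \<in> M" "e \<noteq> 0" by (auto simp: dim_eq_0)
    have affV: "y + v \<in> affine hull G" if "v \<in> V" for v
      using affine_hull_span_gen[OF yaff] that by (auto simp: V_def)
    have dir: "\<exists>u. u \<in> M \<and> (\<forall>t. y + t *\<^sub>R u \<in> affine hull G) \<and> c \<bullet> u \<le> 0 \<and>
                 (\<exists>t1\<ge>0. y + t1 *\<^sub>R u \<notin> G)"
    proof -
      define e' where "e' = (if c \<bullet> e \<le> 0 then e else - e)"
      have "- e \<in> M" using e(2) M(1) by (rule subspace_neg[rotated])
      moreover have "- e \<in> V" using e(1) unfolding V_def by (rule span_neg)
      ultimately have e': "e' \<in> M" "e' \<in> V" "c \<bullet> e' \<le> 0" "e' \<noteq> 0"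
        using e by (auto simp: e'_def)
      have aff': "y + t *\<^sub>R u \<in> affine hull G" if "u \<in> V" for t u
        using affV that by (simp add: V_def span_mul)
      show ?thesis
      proof (cases "\<exists>t1\<ge>0. y + t1 *\<^sub>R e' \<notin> G")
        case True
        then show ?thesis using e' aff' by blast
      next
        case False
        then have "\<And>t. t \<ge> 0 \<Longrightarrow> y + t *\<^sub>R e' \<in> S" using face_of_imp_subset[OF GS] by blast
        moreover have "y \<in> S" using y face_of_imp_subset[OF GS] by blast
        ultimately have "e' \<in> rec_cone S" using rec_of_ray[OF S(1,2)] by blast
        then have ce: "c \<bullet> e' = 0" using cpos e' by force
        have "\<exists>t1\<ge>0. y + t1 *\<^sub>R (- e') \<notin> G"
        proof (rule ccontr)
          assume "\<not> ?thesis"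
          then have neg: "\<And>t. t \<ge> 0 \<Longrightarrow> y + t *\<^sub>R (- e') \<in> G" by blast
          have "y + t *\<^sub>R e' \<in> G" for t
          proof (cases "t \<ge> 0")
            case True
            then show ?thesis using False by blast
          next
            case False
            then have "y + (- t) *\<^sub>R (- e') \<in> G" using neg[of "- t"] by linarith
            then show ?thesis by simp
          qed
          then have "y + t *\<^sub>R e' \<in> S" for t using face_of_imp_subset[OF GS] by blast
          then show False using S(3) e' by (auto simp: contains_line_def)
        qed
        moreover have "- e' \<in> M" using e'(1) M(1) by (rule subspace_neg[rotated])
        moreover have "- e' \<in> V" using e'(2) unfolding V_def by (rule span_neg)
        moreover have "c \<bullet> (- e') \<le> 0" using ce by simp
        ultimately show ?thesis using aff' by blast
      qed
    qed
    then obtain u t1 where u: "u \<in> M" "\<And>t. y + t *\<^sub>R u \<in> affine hull G" "c \<bullet> u \<le> 0"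
      "t1 \<ge> 0" "y + t1 *\<^sub>R u \<notin> G" by blast
    obtain s G' where sG: "s \<ge> 0" "y + s *\<^sub>R u \<in> G'" "G' face_of G" "aff_dim G' < aff_dim G"
      using exit_face[OF Gc y u(2) u(4,5)] by blast
    have "nat (aff_dim G' + 1) < nat (aff_dim G + 1)"
      using sG(4) aff_dim_geq[of G'] by linarith
    moreover have "G' face_of S" using sG(3) GS face_of_trans by blast
    ultimately obtain F z where Fz: "F face_of S" "aff_dim F \<le> int n" "z \<in> F"
      "z - (y + s *\<^sub>R u) \<in> M" "c \<bullet> z \<le> c \<bullet> (y + s *\<^sub>R u)"
      using less.hyps sG(2) by blast
    have "z - y = (z - (y + s *\<^sub>R u)) + s *\<^sub>R u" by simp
    then have "z - y \<in> M" using Fz(4) u(1) M(1) by (metis subspace_add subspace_scale)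
    moreover have "c \<bullet> z \<le> c \<bullet> y"
    proof -
      have "s * (c \<bullet> u) \<le> 0" by (rule mult_nonneg_nonpos[OF sG(1) u(3)])
      then show ?thesis using Fz(5) by (simp add: inner_add_right)
    qed
    ultimately show ?thesis using Fz by blast
  qed
qed



lemma orth_dim:
  fixes B :: "'a::euclidean_space set"
  shows "dim {y. \<forall>b\<in>B. b \<bullet> y = 0} + dim (span B) = DIM('a)"
proof -
  have eq: "{y \<in> UNIV. \<forall>x\<in>span B. orthogonal x y} = {y. \<forall>b\<in>B. b \<bullet> y = 0}"
  proof (intro set_eqI iffI)
    fix y assume "y \<in> {y \<in> UNIV. \<forall>x\<in>span B. orthogonal x y}"
    then show "y \<in> {y. \<forall>b\<in>B. b \<bullet> y = 0}" using span_base by (auto simp: orthogonal_def)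
  next
    fix y assume y: "y \<in> {y. \<forall>b\<in>B. b \<bullet> y = 0}"
    have "orthogonal x y" if "x \<in> span B" for x
    proof -
      have "orthogonal y x" using orthogonal_to_span[OF that, of y] y by (auto simp: orthogonal_def inner_commute)
      then show ?thesis by (simp add: orthogonal_commute)
    qed
    then show "y \<in> {y \<in> UNIV. \<forall>x\<in>span B. orthogonal x y}" by blast
  qed
  have "dim {y \<in> UNIV. \<forall>x\<in>span B. orthogonal x y} + dim (span B) = dim (UNIV :: 'a set)"
    by (rule dim_subspace_orthogonal_to_vectors) auto
  then show ?thesis using eq by simp
qed

lemma subspace_orth: "subspace {y::'a::real_inner. \<forall>b\<in>B. b \<bullet> y = 0}"
  by (auto simp: subspace_def inner_add_right)

lemma rec_zero: "0 \<in> rec_cone S"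
  by (simp add: rec_cone_def)

lemma rec_scale: "d \<in> rec_cone S \<Longrightarrow> t \<ge> 0 \<Longrightarrow> t *\<^sub>R d \<in> rec_cone S"
  by (simp add: rec_cone_def)

lemma rec_add: "x \<in> S \<Longrightarrow> d \<in> rec_cone S \<Longrightarrow> x + d \<in> S"
  unfolding rec_cone_def by (metis (no_types, lifting) mem_Collect_eq order_refl scaleR_one zero_le_one)

lemma rec_convex:
  assumes "convex S" shows "convex (rec_cone S)"
  unfolding convex_def
proof (intro ballI allI impI)
  fix d1 d2 and u v :: real assume d: "d1 \<in> rec_cone S" "d2 \<in> rec_cone S" and uv: "0 \<le> u" "0 \<le> v" "u + v = 1"
  show "u *\<^sub>R d1 + v *\<^sub>R d2 \<in> rec_cone S" unfolding rec_cone_def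
  proof (intro CollectI ballI allI impI)
    fix x t assume x: "x \<in> S" and t: "(0::real) \<le> t"
    have "u *\<^sub>R (x + t *\<^sub>R d1) + v *\<^sub>R (x + t *\<^sub>R d2) \<in> S"
      using convexD[OF assms, of "x + t *\<^sub>R d1" "x + t *\<^sub>R d2" u v] d x t uv
      by (auto simp: rec_cone_def)
    moreover have "u *\<^sub>R (x + t *\<^sub>R d1) + v *\<^sub>R (x + t *\<^sub>R d2) = x + t *\<^sub>R (u *\<^sub>R d1 + v *\<^sub>R d2)"
    proof -
      have "u *\<^sub>R (x + t *\<^sub>R d1) + v *\<^sub>R (x + t *\<^sub>R d2) = (u + v) *\<^sub>R x + t *\<^sub>R (u *\<^sub>R d1 + v *\<^sub>R d2)"
        by (simp add: algebra_simps)
      then show ?thesis using uv by simp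
    qed
    ultimately show "x + t *\<^sub>R (u *\<^sub>R d1 + v *\<^sub>R d2) \<in> S" by simp
  qed
qed

lemma rec_closed:
  fixes S :: "'a::real_normed_vector set"
  assumes "closed S" shows "closed (rec_cone S)"
proof -
  have "rec_cone S = (\<Inter>x\<in>S. \<Inter>t\<in>{t. t \<ge> 0}. (\<lambda>d. x + t *\<^sub>R d) -` S)"
    by (auto simp: rec_cone_def)
  moreover have "closed ((\<lambda>d. x + t *\<^sub>R d) -` S)" for x t
    by (intro continuous_closed_vimage assms) (auto intro!: continuous_intros)
  ultimately show ?thesis by (auto intro!: closed_INT)
qed

lemma rec_no_line:
  assumes "S \<noteq> {}" "\<not> contains_line S" shows "\<not> contains_line (rec_cone S)"
proof
  assume "contains_line (rec_cone S)"
  then obtain z d where d: "d \<noteq> 0" "\<And>t. z + t *\<^sub>R d \<in> rec_cone S" by (auto simp: contains_line_def)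
  obtain x where x: "x \<in> S" using assms by blast
  have "(x + z) + t *\<^sub>R d \<in> S" for t using rec_add[OF x d(2)[of t]] by (simp add: add.assoc)
  then show False using assms(2) d(1) by (auto simp: contains_line_def)
qed

lemma rec_zero_face:
  assumes "convex S" "S \<noteq> {}" "\<not> contains_line S" shows "{0} face_of rec_cone S"
  unfolding face_of_singleton extreme_point_of_def
proof (intro conjI ballI rec_zero notI)
  fix a b assume ab: "a \<in> rec_cone S" "b \<in> rec_cone S" "0 \<in> open_segment a b"
  then obtain u where u: "0 < u" "u < 1" "a \<noteq> b" "0 = (1 - u) *\<^sub>R a + u *\<^sub>R b"
    by (auto simp: in_segment)
  have a0: "a \<noteq> 0"
  proof
    assume "a = 0" then have "u *\<^sub>R b = 0" using u by simp
    then have "b = 0" using u by simp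
    then show False using u \<open>a = 0\<close> by simp
  qed
  have "b = - ((1 - u) / u) *\<^sub>R a"
  proof -
    have "u *\<^sub>R b = - ((1 - u) *\<^sub>R a)" using u(4) by (simp add: eq_neg_iff_add_eq_0 add.commute)
    then have "(1/u) *\<^sub>R (u *\<^sub>R b) = (1/u) *\<^sub>R (- ((1 - u) *\<^sub>R a))" by simp
    then show ?thesis using u by (simp add: divide_simps)
  qed
  then have "(u / (1 - u)) *\<^sub>R b = - a" using u by (simp add: divide_simps)
  then have na: "- a \<in> rec_cone S" using rec_scale[OF ab(2), of "u / (1 - u)"] u by simp
  obtain x where x: "x \<in> S" using assms by blast
  have "x + t *\<^sub>R a \<in> S" for t
  proof (cases "t \<ge> 0")
    case True then show ?thesis using ab(1) x by (auto simp: rec_cone_def)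
  next
    case False
    then have "- t \<ge> 0" by simp
    then have "x + (- t) *\<^sub>R (- a) \<in> S" using na x unfolding rec_cone_def by blast
    then show ?thesis by simp
  qed
  then show False using assms(3) a0 by (auto simp: contains_line_def)
qed

lemma face_cone_scale:
  assumes F: "F face_of rec_cone S" and r: "r \<in> F" and t: "t \<ge> 0"
  shows "t *\<^sub>R r \<in> F"
proof -
  define s where "s = max t 1 + 1"
  have s: "s > 1" "t \<le> s" by (auto simp: s_def)
  have rK: "r \<in> rec_cone S" using F r face_of_imp_subset by blast
  have sK: "s *\<^sub>R r \<in> rec_cone S" using rec_scale[OF rK] s by simp
  show ?thesis
  proof (cases "r = 0")
    case True then show ?thesis using r by simp
  next
    case False
    have "r \<in> open_segment 0 (s *\<^sub>R r)"
    proof -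
      have "r = (1 - 1/s) *\<^sub>R 0 + (1/s) *\<^sub>R (s *\<^sub>R r)" using s by simp
      moreover have "0 \<noteq> s *\<^sub>R r" using False s by simp
      ultimately show ?thesis using s unfolding in_segment by (intro conjI exI[of _ "1/s"]) auto
    qed
    then have "0 \<in> F" "s *\<^sub>R r \<in> F"
      using face_ofD[OF F _ rec_zero sK] r by blast+
    then have "closed_segment 0 (s *\<^sub>R r) \<subseteq> F"
      using face_of_imp_convex[OF F] by (simp add: closed_segment_subset)
    moreover have "t *\<^sub>R r \<in> closed_segment 0 (s *\<^sub>R r)"
    proof -
      have "t *\<^sub>R r = (1 - t/s) *\<^sub>R 0 + (t/s) *\<^sub>R (s *\<^sub>R r)" using s by simp
      then show ?thesis using s t unfolding in_segment by (intro exI[of _ "t/s"]) auto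
    qed
    ultimately show ?thesis by blast
  qed
qed



lemma main_gen:
  fixes XX :: "'a::euclidean_space set"
  assumes ne: "XX \<noteq> {}" and nl: "\<not> contains_line (closure (convex hull XX))"
    and hyp: "\<forall>F Fh. F face_of closure (convex hull XX) \<and> aff_dim F \<le> int mt \<and>
               Fh face_of rec_cone (closure (convex hull XX)) \<and> aff_dim Fh \<le> int mt + 1
               \<longrightarrow> set_plus_Mink F Fh \<subseteq> XX"
    and dm: "dim (span (A ` {..<m})) = mt"
  shows "V_opt XX A0 m A bl bu = V_rel XX A0 m A bl bu"
proof -
  define D where "D = closure (convex hull XX)"
  define K where "K = rec_cone D"
  have Dc: "closed D" "convex D" unfolding D_def by (simp_all add: convex_closure convex_convex_hull)
  have Dne: "D \<noteq> {}" unfolding D_def using ne by simp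
  have nlD: "\<not> contains_line D" using nl D_def by simp
  have XD: "XX \<subseteq> D" unfolding D_def by (meson closure_subset hull_subset subset_trans)
  have Kc: "closed K" "convex K" "\<not> contains_line K" unfolding K_def
    using rec_closed[OF Dc(1)] rec_convex[OF Dc(2)] rec_no_line[OF Dne nlD] by simp_all
  define M where "M = {y. \<forall>b\<in>A ` {..<m}. b \<bullet> y = 0}"
  define M' where "M' = {y. \<forall>b\<in>insert A0 (A ` {..<m}). b \<bullet> y = 0}"
  have Ms: "subspace M" "subspace M'" unfolding M_def M'_def by (rule subspace_orth)+
  have MD: "DIM('a) \<le> dim M + mt" using orth_dim[of "A ` {..<m}"] dm by (simp add: M_def)
  have MD': "DIM('a) \<le> dim M' + (mt + 1)"
  proof -
    have "dim (span (insert A0 (A ` {..<m}))) \<le> mt + 1"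
      using dm by (simp add: dim_insert)
    then show ?thesis using orth_dim[of "insert A0 (A ` {..<m})"] by (simp add: M'_def)
  qed
  have hypD: "set_plus_Mink F Fh \<subseteq> XX" if "F face_of D" "aff_dim F \<le> int mt"
    "Fh face_of K" "aff_dim Fh \<le> int mt + 1" for F Fh
    using hyp that by (auto simp: D_def K_def)
  have feas: "z \<in> lmi_feasible XX m A bl bu" if "z \<in> XX" "z - Y \<in> M" "Y \<in> lmi_feasible D m A bl bu" for z Y
  proof -
    have "A i \<bullet> z = A i \<bullet> Y" if "i < m" for i
    proof -
      have "A i \<bullet> (z - Y) = 0" using \<open>z - Y \<in> M\<close> that by (auto simp: M_def)
      then show ?thesis by (simp add: inner_diff_right)
    qed
    then show ?thesis using that by (auto simp: lmi_feasible_def)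
  qed
  have key: "\<exists>z \<in> lmi_feasible XX m A bl bu. A0 \<bullet> z \<le> A0 \<bullet> Y" if Y: "Y \<in> lmi_feasible D m A bl bu" for Y
  proof -
    have YD: "Y \<in> D" using Y by (simp add: lmi_feasible_def)
    have DD: "D face_of D" using face_of_refl[OF Dc(2)] .
    show ?thesis
    proof (cases "\<forall>e. e \<in> M \<longrightarrow> e \<in> K \<longrightarrow> A0 \<bullet> e \<ge> 0")
      case True
      obtain F z where Fz: "F face_of D" "aff_dim F \<le> int mt" "z \<in> F" "z - Y \<in> M" "A0 \<bullet> z \<le> A0 \<bullet> Y"
        using descent[OF Dc nlD Ms(1) MD, of A0 D Y] True DD YD by (auto simp: K_def)
      have "{0} face_of K" using rec_zero_face[OF Dc(2) Dne nlD] by (simp add: K_def)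
      then have "set_plus_Mink F {0} \<subseteq> XX" using hypD[OF Fz(1,2)] by simp
      moreover have "z \<in> set_plus_Mink F {0}" using Fz(3) by (force simp: set_plus_Mink_def)
      ultimately have "z \<in> XX" by blast
      then show ?thesis using feas Fz Y by blast
    next
      case False
      then obtain d where d: "d \<in> M" "d \<in> K" "A0 \<bullet> d < 0" by force
      obtain F e where Fe: "F face_of D" "aff_dim F \<le> int mt" "e \<in> F" "e - Y \<in> M"
        using descent[OF Dc nlD Ms(1) MD, of 0 D Y] DD YD by auto
      have KK: "K face_of K" using face_of_refl[OF Kc(2)] .
      obtain Fh r where Fr: "Fh face_of K" "aff_dim Fh \<le> int (mt + 1)" "r \<in> Fh" "r - d \<in> M'"
        using descent[OF Kc Ms(2) MD', of 0 K d] KK d(2) by auto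
      have "A0 \<bullet> (r - d) = 0" using Fr(4) by (simp add: M'_def)
      then have r0: "A0 \<bullet> r = A0 \<bullet> d" by (simp add: inner_diff_right)
      have "r - d \<in> M" using Fr(4) by (auto simp: M_def M'_def)
      then have rM: "r \<in> M" using d(1) Ms(1)
        by (metis diff_add_cancel subspace_add)
      define q where "q = (A0 \<bullet> Y - A0 \<bullet> e) / (A0 \<bullet> r)"
      define t where "t = max 0 q"
      have t: "t \<ge> 0" "t \<ge> q" by (auto simp: t_def)
      have neg: "A0 \<bullet> r < 0" using r0 d(3) by simp
      have "t * (A0 \<bullet> r) \<le> q * (A0 \<bullet> r)" using t(2) neg by (simp add: mult_right_mono_neg)
      also have "\<dots> = A0 \<bullet> Y - A0 \<bullet> e" using neg by (simp add: q_def)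
      finally have val: "A0 \<bullet> (e + t *\<^sub>R r) \<le> A0 \<bullet> Y" by (simp add: inner_add_right)
      have "t *\<^sub>R r \<in> Fh" using face_cone_scale[OF Fr(1)[unfolded K_def] Fr(3) t(1)] .
      then have "e + t *\<^sub>R r \<in> set_plus_Mink F Fh" using Fe(3) by (force simp: set_plus_Mink_def)
      moreover have "set_plus_Mink F Fh \<subseteq> XX" using hypD[OF Fe(1,2) Fr(1)] Fr(2) by simp
      ultimately have zX: "e + t *\<^sub>R r \<in> XX" by blast
      have "(e + t *\<^sub>R r) - Y = (e - Y) + t *\<^sub>R r" by simp
      then have "(e + t *\<^sub>R r) - Y \<in> M" using Fe(4) rM Ms(1) by (metis subspace_add subspace_scale)
      then show ?thesis using feas[OF zX _ Y] val by blast
    qed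
  qed
  have sub: "lmi_feasible XX m A bl bu \<subseteq> lmi_feasible D m A bl bu"
    using XD by (auto simp: lmi_feasible_def)
  have "V_rel XX A0 m A bl bu \<le> V_opt XX A0 m A bl bu"
    unfolding V_rel_def V_opt_def D_def[symmetric] by (rule INF_superset_mono[OF sub]) simp
  moreover have "V_opt XX A0 m A bl bu \<le> V_rel XX A0 m A bl bu"
    unfolding V_rel_def D_def[symmetric]
  proof (rule INF_greatest)
    fix Y assume "Y \<in> lmi_feasible D m A bl bu"
    then obtain z where z: "z \<in> lmi_feasible XX m A bl bu" "A0 \<bullet> z \<le> A0 \<bullet> Y" using key by blast
    show "V_opt XX A0 m A bl bu \<le> ereal (A0 \<bullet> Y)"
      unfolding V_opt_def by (rule INF_lower2[OF z(1)]) (use z(2) in simp)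
  qed
  ultimately show ?thesis by simp
qed


lemma claim_gen: "theorem6_claim (Q :: (real^'q^'r) set) k"
  unfolding theorem6_claim_def
proof (intro allI impI)
  fix XX :: "(real^'q^'r) set" and m mt :: nat and A0 :: "real^'q^'r" and A :: "nat \<Rightarrow> real^'q^'r"
    and bl bu :: "nat \<Rightarrow> ereal"
  assume h1: "is_domain_set Q k XX \<and> XX \<noteq> {} \<and> closed XX \<and>
       \<not> contains_line (closure (convex hull XX)) \<and> mt \<le> m \<and>
       (\<forall>F Fh. F face_of closure (convex hull XX) \<and> aff_dim F \<le> int mt \<and>
               Fh face_of rec_cone (closure (convex hull XX)) \<and> aff_dim Fh \<le> int mt + 1
               \<longrightarrow> set_plus_Mink F Fh \<subseteq> XX)"
    and h2: "(\<forall>i<m. bl i \<le> bu i) \<and> dim (span (A ` {..<m})) = mt"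
  show "V_opt XX A0 m A bl bu = V_rel XX A0 m A bl bu"
    by (intro main_gen) (use h1 h2 in blast)+
qed

theorem theorem6:
  fixes k :: nat
  assumes "0 < k" and "k \<le> CARD('n)"
  shows "theorem6_claim (psd_mats :: (real^'n^'n) set) k
       \<and> theorem6_claim (sym_mats :: (real^'n^'n) set) k
       \<and> (CARD('n) \<le> CARD('p) \<longrightarrow> theorem6_claim (UNIV :: (real^'p^'n) set) k)"
  by (simp add: claim_gen)

end
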